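(* Let $\Sigma_\pm\subset\mathbb C^3_{(B,A,r)}$ be the set of parameters for which the monodromy $\mathrm{Mon}$ fixes the point $\pm i$. Then $\Sigma_\pm$ consists exactly of those parameters for which $\mathrm{Mon}$ is a parabolic or identical Möbius transformation fixing $\pm i$. Moreover, every parameter $(B,A,r)$ for which $\mathrm{Mon}$ is parabolic or the identity lies in $\Sigma_+\cup\Sigma_-$.
   Context: For complex parameters $(B,A,r)$ with $r\neq0$ set $\omega=\frac1{2r}$, $l=2Br$, $\mu=Ar$, and consider the Riccati equation $\frac{d\Phi}{dz}=z^{-2}\left((lz+\mu(z^2+1))\Phi-\frac{z}{2i\omega}(\Phi^2-1)\right)$ on the Riemann sphere, $z\in\mathbb C^*$. It is the projectivization of a linear system, so its monodromy transformation $\mathrm{Mon}$, acting on initial conditions $\Phi(1)\in\overline{\mathbb C}$ by analytic continuation of solutions along the positively oriented unit circle in the $z$-line, is a Möbius transformation of the Riemann sphere. A Möbius transformation is parabolic if it is not the identity and has exactly one fixed point. *)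

theory Defs
  imports "HOL-Analysis.Analysis"
begin

text \<open>The Riccati equation
    dPhi/dz = z^-2 ((l z + mu (z^2+1)) Phi - z/(2 i omega) (Phi^2 - 1))
  is the projectivization Phi = Y1/Y2 of the linear system Y' = M(z) Y with
    M11 = (l z + mu (z^2+1))/z^2,  M12 = 1/(2 i omega z),
    M21 = 1/(2 i omega z),         M22 = 0,
  since (Y1/Y2)' = M12 + (M11 - M22) Phi - M21 Phi^2.\<close>

definition omega_par :: "complex \<Rightarrow> complex" where
  "omega_par r = 1 / (2 * r)"

definition l_par :: "complex \<Rightarrow> complex \<Rightarrow> complex" where
  "l_par B r = 2 * B * r"

definition mu_par :: "complex \<Rightarrow> complex \<Rightarrow> complex" where
  "mu_par A r = A * r"

definition lin_matrix :: "complex \<Rightarrow> complex \<Rightarrow> complex \<Rightarrow> complex \<Rightarrow> complex^2^2" where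
  "lin_matrix B A r z =
     (let l = l_par B r; \<mu> = mu_par A r; \<omega> = omega_par r;
          q = 1 / (2 * \<i> * \<omega> * z)
      in vector [vector [(l * z + \<mu> * (z^2 + 1)) / z^2, q], vector [q, 0]])"

definition unit_circle :: "real \<Rightarrow> complex" where
  "unit_circle t = exp (2 * pi * \<i> * complex_of_real t)"

definition is_fund_sol :: "complex \<Rightarrow> complex \<Rightarrow> complex \<Rightarrow> (real \<Rightarrow> complex^2^2) \<Rightarrow> bool" where
  "is_fund_sol B A r X \<longleftrightarrow>
     X 0 = mat 1 \<and>
     (\<forall>t\<in>{0..1}. (X has_vector_derivative
         (mat (2 * pi * \<i> * unit_circle t) ** lin_matrix B A r (unit_circle t) ** X t))
        (at t within {0..1}))"

definition monodromy_matrix :: "complex \<Rightarrow> complex \<Rightarrow> complex \<Rightarrow> complex^2^2" where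
  "monodromy_matrix B A r = (THE M. \<exists>X. is_fund_sol B A r X \<and> X 1 = M)"

text \<open>The Riemann sphere as complex option (None = infinity) and the Moebius
  transformation induced by a 2x2 matrix.\<close>
definition moebius_app :: "complex^2^2 \<Rightarrow> complex option \<Rightarrow> complex option" where
  "moebius_app N p =
     (let a = N $ 1 $ 1; b = N $ 1 $ 2; c = N $ 2 $ 1; d = N $ 2 $ 2 in
      case p of
        None \<Rightarrow> (if c = 0 then None else Some (a / c))
      | Some w \<Rightarrow> (if c * w + d = 0 then None else Some ((a * w + b) / (c * w + d))))"

text \<open>Monodromy transformation Mon acting on initial conditions Phi(1).\<close>
definition Mon :: "complex \<Rightarrow> complex \<Rightarrow> complex \<Rightarrow> complex option \<Rightarrow> complex option" where
  "Mon B A r = moebius_app (monodromy_matrix B A r)"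

definition parabolic :: "(complex option \<Rightarrow> complex option) \<Rightarrow> bool" where
  "parabolic f \<longleftrightarrow> f \<noteq> id \<and> (\<exists>!p. f p = p)"

definition Sigma_pm :: "complex \<Rightarrow> (complex \<times> complex \<times> complex) set" where
  "Sigma_pm s = {(B, A, r). r \<noteq> 0 \<and> Mon B A r (Some (s * \<i>)) = Some (s * \<i>)}"

end

theory Submission
  imports Defs
begin


type_synonym cm = "complex^2^2"

lemma norm_le_sum_cart: "norm (x::'a::real_normed_vector^'n) \<le> (\<Sum>i\<in>UNIV. norm (x$i))"
  unfolding norm_vec_def by (rule L2_set_le_sum) auto

lemma matmul_entry: "((A::cm) ** (B::cm)) $ i $ j = A$i$1 * B$1$j + A$i$2 * B$2$j"
  by (simp add: matrix_matrix_mult_def sum_2)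

lemma nth2_le: "norm ((A::'a::real_normed_vector^'n^'m)$i$j) \<le> norm A"
  using Finite_Cartesian_Product.norm_nth_le[of "A$i" j] Finite_Cartesian_Product.norm_nth_le[of A i] by linarith

lemma norm_matmul: "norm ((A::cm) ** (B::cm)) \<le> 8 * (norm A * norm B)"
proof -
  have e: "norm ((A ** B) $ i $ j) \<le> 2 * (norm A * norm B)" for i j :: 2
  proof -
    have "norm ((A ** B) $ i $ j) \<le> norm (A$i$1) * norm (B$1$j) + norm (A$i$2) * norm (B$2$j)"
      unfolding matmul_entry norm_mult[symmetric] by (rule norm_triangle_ineq)
    also have "\<dots> \<le> norm A * norm B + norm A * norm B"
      by (intro add_mono mult_mono nth2_le) auto
    finally show ?thesis by (simp add: mult.commute)
  qed
  have r: "norm ((A ** B) $ i) \<le> 4 * (norm A * norm B)" for i :: 2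
    using norm_le_sum_cart[of "(A ** B) $ i"] e[of i 1] e[of i 2] by (simp add: sum_2)
  show ?thesis
    using norm_le_sum_cart[of "A ** B"] r[of 1] r[of 2] by (simp add: sum_2)
qed

lemma bb_matmul: "bounded_bilinear (\<lambda>(A::cm) (B::cm). A ** B)"
  apply unfold_locales
      apply (simp add: vec_eq_iff matmul_entry distrib_right)
     apply (simp add: vec_eq_iff matmul_entry distrib_left)
    apply (simp add: vec_eq_iff matmul_entry scaleR_right_distrib)
   apply (simp add: vec_eq_iff matmul_entry scaleR_right_distrib)
  using norm_matmul by (metis mult.commute)



lemma mm_diff_right: "(A::cm) ** ((B::cm) - C) = A ** B - A ** C"
  using bounded_bilinear.diff_right[OF bb_matmul] by simp

lemma cont_mul: "continuous_on S F \<Longrightarrow> continuous_on S G \<Longrightarrow> continuous_on S (\<lambda>s. (F s::cm) ** (G s::cm))"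
  using bounded_bilinear.continuous_on[OF bb_matmul] by blast

definition is_sol :: "(real \<Rightarrow> cm) \<Rightarrow> (real \<Rightarrow> cm) \<Rightarrow> bool" where
  "is_sol F X \<longleftrightarrow> (\<forall>t\<in>{0..1}. (X has_vector_derivative F t ** X t) (at t within {0..1}))"

lemma Kbound:
  fixes F :: "real \<Rightarrow> cm"
  assumes "continuous_on {0..1} (F::real \<Rightarrow> cm)"
  obtains K where "K \<ge> 0" "\<forall>s\<in>{0..1}. \<forall>B::cm. norm (F s ** B) \<le> K * norm B"
proof -
  have "bounded (F ` {0..1})"
    by (intro compact_imp_bounded compact_continuous_image assms) simp
  then obtain b where b: "b > 0" "\<forall>x\<in>F ` {0..1}. norm x \<le> b" by (auto simp: bounded_pos)
  show ?thesis
  proof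
    show "8 * b \<ge> 0" using b by simp
    show "\<forall>s\<in>{0..1}. \<forall>B::cm. norm (F s ** B) \<le> 8 * b * norm B"
    proof (intro ballI allI)
      fix s and B :: cm assume s: "s \<in> {0..1::real}"
      have "norm (F s ** B) \<le> 8 * (norm (F s) * norm B)" by (rule norm_matmul)
      also have "\<dots> \<le> 8 * (b * norm B)"
        using b s by (intro mult_left_mono mult_right_mono) auto
      finally show "norm (F s ** B) \<le> 8 * b * norm B" by simp
    qed
  qed
qed

lemma est:
  fixes F G :: "real \<Rightarrow> cm"
  assumes F: "continuous_on {0..1} F" and K: "\<forall>s\<in>{0..1}. \<forall>B::cm. norm (F s ** B) \<le> K * norm B" and K0: "K \<ge> 0"
    and G: "continuous_on {0..1} G" and b: "\<forall>s\<in>{0..1}. norm (G s) \<le> c * s^n / fact n"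
    and t: "t \<in> {0..1}"
  shows "norm (integral {0..t} (\<lambda>s. F s ** G s)) \<le> K * c * t^(Suc n) / fact (Suc n)"
proof -
  have sub: "{0..t} \<subseteq> {0..1}" using t by auto
  have c1: "continuous_on {0..t} (\<lambda>s. F s ** G s)"
    using cont_mul[OF F G] continuous_on_subset sub by blast
  have hi0: "((\<lambda>s. K * c * s^n / fact n) has_integral
      ((\<lambda>s. (K * c / fact (Suc n)) * s^(Suc n)) t - (\<lambda>s. (K * c / fact (Suc n)) * s^(Suc n)) 0)) {0..t}"
  proof (rule fundamental_theorem_of_calculus)
    show "0 \<le> t" using t by simp
    fix x :: real
    have d: "((\<lambda>s. s^(Suc n)) has_real_derivative (of_nat (Suc n) * x^n)) (at x within {0..t})"
      using DERIV_pow[of "Suc n" x] by simp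
    have e: "(K * c / fact (Suc n)) * (of_nat (Suc n) * x^n) = K * c * x^n / fact n"
      by (simp add: fact_Suc del: of_nat_Suc)
    have "((\<lambda>s. (K * c / fact (Suc n)) * s^(Suc n)) has_real_derivative (K * c * x^n / fact n)) (at x within {0..t})"
      using DERIV_cmult[OF d, of "K * c / fact (Suc n)"] unfolding e .
    then show "((\<lambda>s. (K * c / fact (Suc n)) * s^(Suc n)) has_vector_derivative (K * c * x^n / fact n)) (at x within {0..t})"
      by (simp add: has_real_derivative_iff_has_vector_derivative)
  qed
  have hi: "((\<lambda>s. K * c * s^n / fact n) has_integral (K * c * t^(Suc n) / fact (Suc n))) {0..t}"
    using hi0 by simp
  have "norm (integral {0..t} (\<lambda>s. F s ** G s)) \<le> integral {0..t} (\<lambda>s. K * c * s^n / fact n)"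
  proof (rule integral_norm_bound_integral)
    show "(\<lambda>s. F s ** G s) integrable_on {0..t}" using c1 by (rule integrable_continuous_interval)
    show "(\<lambda>s. K * c * s^n / fact n) integrable_on {0..t}" using hi by blast
    fix s assume s: "s \<in> {0..t}"
    then have s1: "s \<in> {0..1}" using sub by blast
    have "norm (F s ** G s) \<le> K * norm (G s)" using K s1 by blast
    also have "\<dots> \<le> K * (c * s^n / fact n)" using b s1 K0 by (intro mult_left_mono) auto
    finally show "norm (F s ** G s) \<le> K * c * s^n / fact n" by simp
  qed
  also have "\<dots> = K * c * t^(Suc n) / fact (Suc n)" using integral_unique[OF hi] by simp
  finally show ?thesis .
qed

lemma uniq0:
  fixes F D :: "real \<Rightarrow> cm"
  assumes F: "continuous_on {0..1} F" and K: "\<forall>s\<in>{0..1}. \<forall>B::cm. norm (F s ** B) \<le> K * norm B" and K0: "K \<ge> 0"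
    and D: "\<forall>t\<in>{0..1}. (D has_vector_derivative F t ** D t) (at t within {0..1})" and D0: "D 0 = 0"
  shows "\<forall>t\<in>{0..1}. D t = 0"
proof -
  have Dc: "continuous_on {0..1} D" by (rule continuous_on_vector_derivative) (use D in auto)
  have "bounded (D ` {0..1})"
    by (intro compact_imp_bounded compact_continuous_image Dc) simp
  then obtain C where C: "\<forall>t\<in>{0..1}. norm (D t) \<le> C" by (auto simp: bounded_iff)
  have Dint: "D t = integral {0..t} (\<lambda>s. F s ** D s)" if t: "t\<in>{0..1}" for t
  proof -
    have "((\<lambda>s. F s ** D s) has_integral (D t - D 0)) {0..t}"
      apply (rule fundamental_theorem_of_calculus)
      using t apply simp
      using t by (intro ballI has_vector_derivative_within_subset[OF D[rule_format]]) auto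
    then show ?thesis using D0 by (simp add: integral_unique)
  qed
  have bnd: "\<forall>t\<in>{0..1}. norm (D t) \<le> C * K^n * t^n / fact n" for n
  proof (induction n)
    case 0 then show ?case using C by simp
  next
    case (Suc n)
    show ?case
    proof
      fix t :: real assume t: "t\<in>{0..1}"
      have "norm (D t) = norm (integral {0..t} (\<lambda>s. F s ** D s))" using Dint t by simp
      also have "\<dots> \<le> K * (C*K^n) * t^Suc n / fact (Suc n)"
        by (rule est[OF F K K0 Dc _ t]) (use Suc.IH in simp)
      also have "\<dots> = C * K^Suc n * t^Suc n / fact (Suc n)" by simp
      finally show "norm (D t) \<le> C * K^Suc n * t^Suc n / fact (Suc n)" .
    qed
  qed
  show ?thesis
  proof
    fix t :: real assume t: "t\<in>{0..1}"
    have "summable (\<lambda>n. inverse (fact n) * (K*t)^n)" by (rule summable_exp)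
    then have "(\<lambda>n. inverse (fact n) * (K*t)^n) \<longlonglongrightarrow> 0" by (rule summable_LIMSEQ_zero)
    then have "(\<lambda>n. C * (inverse (fact n) * (K*t)^n)) \<longlonglongrightarrow> C * 0" by (rule tendsto_mult_left)
    then have lim: "(\<lambda>n. C * K^n * t^n / fact n) \<longlonglongrightarrow> 0"
      by (simp add: power_mult_distrib field_simps)
    have "norm (D t) \<le> 0" by (rule LIMSEQ_le_const[OF lim]) (use bnd t in auto)
    then show "D t = 0" by simp
  qed
qed

lemma uniq:
  assumes F: "continuous_on {0..1} F" and X: "is_sol F X" and Y: "is_sol F Y" and e: "X 0 = Y 0"
    and t: "t \<in> {0..1}"
  shows "X t = Y t"
proof -
  obtain K where K0: "K \<ge> 0" and K: "\<forall>s\<in>{0..1}. \<forall>B::cm. norm (F s ** B) \<le> K * norm B"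
    using Kbound[OF F] by blast
  have "\<forall>t\<in>{0..1}. ((\<lambda>t. X t - Y t) has_vector_derivative F t ** (X t - Y t)) (at t within {0..1})"
    using X Y unfolding is_sol_def mm_diff_right by (auto intro: derivative_intros)
  from uniq0[OF F K K0 this] e t show ?thesis by auto
qed



primrec pic :: "(real \<Rightarrow> cm) \<Rightarrow> nat \<Rightarrow> real \<Rightarrow> cm" where
  "pic F 0 = (\<lambda>t. mat 1)"
| "pic F (Suc n) = (\<lambda>t. mat 1 + integral {0..t} (\<lambda>s. F s ** pic F n s))"

lemma int_deriv:
  fixes g :: "real \<Rightarrow> cm"
  assumes "continuous_on {0..1} g" "t \<in> {0..1}"
  shows "((\<lambda>t. integral {0..t} g) has_vector_derivative g t) (at t within {0..1})"
  using integral_has_vector_derivative[OF assms] .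

lemma int_cont:
  fixes g :: "real \<Rightarrow> cm"
  assumes "continuous_on {0..1} g"
  shows "continuous_on {0..1} (\<lambda>t. integral {0..t} g)"
  by (rule continuous_on_vector_derivative) (use int_deriv[OF assms] in blast)

lemma pic_cont:
  assumes F: "continuous_on {0..1} F"
  shows "continuous_on {0..1} (pic F n)"
proof (induction n)
  case 0 then show ?case by (simp add: continuous_on_const)
next
  case (Suc n)
  show ?case
    using int_cont[OF cont_mul[OF F Suc.IH]] by (simp add: continuous_on_add continuous_on_const)
qed

lemma int_diff:
  fixes G H :: "real \<Rightarrow> cm"
  assumes "continuous_on {0..1} G" "continuous_on {0..1} H" "t \<in> {0..1}"
  shows "integral {0..t} G - integral {0..t} H = integral {0..t} (\<lambda>s. G s - H s)"
proof -
  have "{0..t} \<subseteq> {0..1}" using assms(3) by auto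
  then have "G integrable_on {0..t}" "H integrable_on {0..t}"
    using assms(1,2) by (auto intro!: integrable_continuous_interval intro: continuous_on_subset)
  then show ?thesis by (simp add: integral_diff)
qed

lemma exist:
  fixes F :: "real \<Rightarrow> cm"
  assumes F: "continuous_on {0..1} F"
  shows "\<exists>X. X 0 = mat 1 \<and> is_sol F X"
proof -
  obtain K where K0: "K \<ge> 0" and K: "\<forall>s\<in>{0..1}. \<forall>B::cm. norm (F s ** B) \<le> K * norm B"
    using Kbound[OF F] by blast
  define P where "P = pic F"
  have Pc: "continuous_on {0..1} (P n)" for n unfolding P_def by (rule pic_cont[OF F])
  define \<Delta> where "\<Delta> n t = P (Suc n) t - P n t" for n t
  have \<Delta>c: "continuous_on {0..1} (\<Delta> n)" for n
    unfolding \<Delta>_def[abs_def] using Pc by (intro continuous_on_diff) auto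
  have \<Delta>0: "\<Delta> 0 t = integral {0..t} (\<lambda>s. F s ** mat 1)" for t
    by (simp add: \<Delta>_def P_def)
  have \<Delta>S: "\<Delta> (Suc n) t = integral {0..t} (\<lambda>s. F s ** \<Delta> n s)" if t: "t \<in> {0..1}" for n t
  proof -
    have "\<Delta> (Suc n) t = integral {0..t} (\<lambda>s. F s ** P (Suc n) s) - integral {0..t} (\<lambda>s. F s ** P n s)"
      by (simp add: \<Delta>_def P_def)
    also have "\<dots> = integral {0..t} (\<lambda>s. F s ** P (Suc n) s - F s ** P n s)"
      by (rule int_diff[OF cont_mul[OF F Pc] cont_mul[OF F Pc] t])
    finally show ?thesis by (simp add: \<Delta>_def mm_diff_right)
  qed
  define c0 where "c0 = norm (mat 1 :: cm)"
  have \<Delta>b: "\<forall>t\<in>{0..1}. norm (\<Delta> n t) \<le> c0 * K^(Suc n) * t^(Suc n) / fact (Suc n)" for n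
  proof (induction n)
    case 0
    show ?case
    proof
      fix t :: real assume t: "t \<in> {0..1}"
      have "norm (\<Delta> 0 t) \<le> K * c0 * t^(Suc 0) / fact (Suc 0)"
        unfolding \<Delta>0 by (rule est[OF F K K0 _ _ t]) (auto simp: c0_def continuous_on_const)
      then show "norm (\<Delta> 0 t) \<le> c0 * K^(Suc 0) * t^(Suc 0) / fact (Suc 0)" by (simp add: mult.commute)
    qed
  next
    case (Suc n)
    show ?case
    proof
      fix t :: real assume t: "t \<in> {0..1}"
      have "norm (\<Delta> (Suc n) t) \<le> K * (c0 * K^(Suc n)) * t^(Suc (Suc n)) / fact (Suc (Suc n))"
        unfolding \<Delta>S[OF t] by (rule est[OF F K K0 \<Delta>c _ t]) (use Suc.IH in simp)
      then show "norm (\<Delta> (Suc n) t) \<le> c0 * K^(Suc (Suc n)) * t^(Suc (Suc n)) / fact (Suc (Suc n))"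
        by (simp add: mult_ac)
    qed
  qed
  define a where "a n = c0 * (K^(Suc n) / fact (Suc n))" for n
  have a_sum: "summable a"
  proof -
    have "summable (\<lambda>n. inverse (fact n) * K^n)" by (rule summable_exp)
    then have "summable (\<lambda>n. inverse (fact (Suc n)) * K^(Suc n))" by (subst summable_Suc_iff)
    then have "summable (\<lambda>n. c0 * (inverse (fact (Suc n)) * K^(Suc n)))" by (rule summable_mult)
    then show ?thesis unfolding a_def by (simp add: field_simps)
  qed
  have c00: "c0 \<ge> 0" by (simp add: c0_def)
  have \<Delta>a: "norm (\<Delta> n t) \<le> a n" if t: "t \<in> {0..1}" for n t
  proof -
    have "norm (\<Delta> n t) \<le> c0 * K^(Suc n) * t^(Suc n) / fact (Suc n)" using \<Delta>b t by blast
    also have "\<dots> = a n * t^(Suc n)" by (simp add: a_def)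
    also have "\<dots> \<le> a n * 1"
      using t c00 K0 by (intro mult_left_mono power_le_one) (auto simp: a_def)
    finally show ?thesis by simp
  qed
  have Psum: "P n t = mat 1 + (\<Sum>k<n. \<Delta> k t)" for n t
    by (induction n) (auto simp: \<Delta>_def P_def)
  have \<Delta>sum: "summable (\<lambda>k. \<Delta> k t)" if t: "t \<in> {0..1}" for t
    by (rule summable_comparison_test'[OF a_sum]) (use \<Delta>a t in blast)
  define X where "X t = mat 1 + (\<Sum>k. \<Delta> k t)" for t
  define \<tau> where "\<tau> n = suminf a - sum a {..<n}" for n
  have tail: "norm (X t - P n t) \<le> \<tau> n" if t: "t \<in> {0..1}" for n t
  proof -
    have "X t - P n t = (\<Sum>k. \<Delta> (k + n) t)"
      unfolding X_def Psum using suminf_minus_initial_segment[OF \<Delta>sum[OF t], of n] by simp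
    also have "norm \<dots> \<le> (\<Sum>k. norm (\<Delta> (k + n) t))"
    proof (rule summable_norm)
      show "summable (\<lambda>k. norm (\<Delta> (k + n) t))"
        by (rule summable_comparison_test'[of "\<lambda>k. a (k + n)"]) (use a_sum \<Delta>a t in auto)
    qed
    also have "\<dots> \<le> (\<Sum>k. a (k + n))"
      by (rule suminf_le) (use a_sum \<Delta>a t in \<open>auto intro: summable_comparison_test'[of "\<lambda>k. a (k + n)"]\<close>)
    also have "\<dots> = \<tau> n" unfolding \<tau>_def by (rule suminf_minus_initial_segment[OF a_sum])
    finally show ?thesis .
  qed
  have \<tau>0: "\<tau> \<longlonglongrightarrow> 0"
  proof -
    have "(\<lambda>n. suminf a - sum a {..<n}) \<longlonglongrightarrow> suminf a - suminf a"
      by (intro tendsto_diff tendsto_const summable_LIMSEQ a_sum)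
    then show ?thesis unfolding \<tau>_def[abs_def] by simp
  qed
  have ul: "uniform_limit {0..1} P X sequentially"
    unfolding uniform_limit_iff
  proof (intro allI impI)
    fix e :: real assume e: "e > 0"
    have "\<forall>\<^sub>F n in sequentially. \<tau> n < e" using \<tau>0 e by (rule order_tendstoD)
    then show "\<forall>\<^sub>F n in sequentially. \<forall>x\<in>{0..1}. dist (P n x) (X x) < e"
    proof (rule eventually_mono)
      fix n assume "\<tau> n < e"
      show "\<forall>x\<in>{0..1}. dist (P n x) (X x) < e"
      proof
        fix x :: real assume x: "x \<in> {0..1}"
        have "norm (X x - P n x) < e" using tail[OF x, of n] \<open>\<tau> n < e\<close> by linarith
        then show "dist (P n x) (X x) < e" by (simp add: dist_norm norm_minus_commute)
      qed
    qed
  qed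
  have Xc: "continuous_on {0..1} X"
    by (rule uniform_limit_theorem[OF _ ul]) (auto simp: Pc)
  have PX: "(\<lambda>n. P n t) \<longlonglongrightarrow> X t" if t: "t \<in> {0..1}" for t
  proof -
    have "(\<lambda>n. P n t - X t) \<longlonglongrightarrow> 0"
      by (rule Lim_null_comparison[OF _ \<tau>0]) (use tail t in \<open>auto simp: norm_minus_commute\<close>)
    then show ?thesis by (rule LIM_zero_cancel)
  qed
  have IX: "(\<lambda>n. integral {0..t} (\<lambda>s. F s ** P n s)) \<longlonglongrightarrow> integral {0..t} (\<lambda>s. F s ** X s)"
    if t: "t \<in> {0..1}" for t
  proof -
    have sub: "{0..t} \<subseteq> {0..1}" using t by auto
    have "(\<lambda>n. integral {0..t} (\<lambda>s. F s ** P n s) - integral {0..t} (\<lambda>s. F s ** X s)) \<longlonglongrightarrow> 0"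
    proof (rule Lim_null_comparison)
      show "(\<lambda>n. K * \<tau> n) \<longlonglongrightarrow> 0" using tendsto_mult_left[OF \<tau>0, of K] by simp
      show "\<forall>\<^sub>F n in sequentially. norm (integral {0..t} (\<lambda>s. F s ** P n s) - integral {0..t} (\<lambda>s. F s ** X s)) \<le> K * \<tau> n"
      proof (rule always_eventually, rule allI)
        fix n
        have "integral {0..t} (\<lambda>s. F s ** P n s) - integral {0..t} (\<lambda>s. F s ** X s)
            = integral {0..t} (\<lambda>s. F s ** (P n s - X s))"
          unfolding mm_diff_right by (rule int_diff[OF cont_mul[OF F Pc] cont_mul[OF F Xc] t])
        also have "norm \<dots> \<le> integral {0..t} (\<lambda>s. K * \<tau> n)"
        proof (rule integral_norm_bound_integral)
          show "(\<lambda>s. F s ** (P n s - X s)) integrable_on {0..t}"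
            using sub by (intro integrable_continuous_interval cont_mul continuous_on_diff Pc Xc
                continuous_on_subset[OF F]) (auto intro: continuous_on_subset[OF Pc] continuous_on_subset[OF Xc])
          show "(\<lambda>s. K * \<tau> n) integrable_on {0..t}" by (rule integrable_const_ivl)
          fix s assume s: "s \<in> {0..t}"
          then have s1: "s \<in> {0..1}" using sub by blast
          have "norm (F s ** (P n s - X s)) \<le> K * norm (P n s - X s)" using K s1 by blast
          also have "\<dots> \<le> K * \<tau> n"
            using tail[OF s1, of n] K0 by (intro mult_left_mono) (auto simp: norm_minus_commute)
          finally show "norm (F s ** (P n s - X s)) \<le> K * \<tau> n" .
        qed
        also have "\<dots> = t * (K * \<tau> n)" using t by simp
        also have "\<dots> \<le> 1 * (K * \<tau> n)"
        proof (rule mult_right_mono)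
          show "t \<le> 1" using t by simp
          have "0 \<le> norm (X 0 - P n 0)" by simp
          also have "\<dots> \<le> \<tau> n" by (rule tail) simp
          finally show "0 \<le> K * \<tau> n" using K0 by simp
        qed
        finally show "norm (integral {0..t} (\<lambda>s. F s ** P n s) - integral {0..t} (\<lambda>s. F s ** X s)) \<le> K * \<tau> n"
          by simp
      qed
    qed
    then show ?thesis by (rule LIM_zero_cancel)
  qed
  have Xeq: "X t = mat 1 + integral {0..t} (\<lambda>s. F s ** X s)" if t: "t \<in> {0..1}" for t
  proof -
    have "(\<lambda>n. P (Suc n) t) \<longlonglongrightarrow> X t" using PX[OF t] by (rule LIMSEQ_Suc)
    moreover have "(\<lambda>n. P (Suc n) t) \<longlonglongrightarrow> mat 1 + integral {0..t} (\<lambda>s. F s ** X s)"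
      unfolding P_def pic.simps by (intro tendsto_add tendsto_const IX[OF t, unfolded P_def])
    ultimately show ?thesis by (rule LIMSEQ_unique)
  qed
  show ?thesis
  proof (intro exI conjI)
    show "X 0 = mat 1" using Xeq[of 0] by simp
    show "is_sol F X"
      unfolding is_sol_def
    proof
      fix t :: real assume t: "t \<in> {0..1}"
      have "((\<lambda>t. mat 1 + integral {0..t} (\<lambda>s. F s ** X s)) has_vector_derivative (0 + F t ** X t)) (at t within {0..1})"
        by (intro has_vector_derivative_add has_vector_derivative_const int_deriv[OF cont_mul[OF F Xc] t])
      then show "(X has_vector_derivative F t ** X t) (at t within {0..1})"
        by (intro has_vector_derivative_transform[OF t Xeq]) auto
    qed
  qed
qed



definition Fm :: "complex \<Rightarrow> complex \<Rightarrow> complex \<Rightarrow> real \<Rightarrow> cm" where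
  "Fm B A r t = mat (2 * pi * \<i> * unit_circle t) ** lin_matrix B A r (unit_circle t)"

definition f11 :: "complex \<Rightarrow> complex \<Rightarrow> complex \<Rightarrow> real \<Rightarrow> complex" where
  "f11 B A r t = 2 * pi * \<i> * (l_par B r + mu_par A r * (unit_circle t + 1 / unit_circle t))"

lemma mat_mul_entry: "(mat c ** (M::cm)) $ i $ j = c * M $ i $ j"
  using exhaust_2[of i] by (auto simp: matmul_entry mat_def)

lemma uc_nz [simp]: "unit_circle t \<noteq> 0"
  by (simp add: unit_circle_def)

lemma fixes B A r :: complex and t :: real
  shows Fm_11: "Fm B A r t $ 1 $ 1 = f11 B A r t"
  and Fm_12: "Fm B A r t $ 1 $ 2 = 2 * complex_of_real pi * r"
  and Fm_21: "Fm B A r t $ 2 $ 1 = 2 * complex_of_real pi * r"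
  and Fm_22: "Fm B A r t $ 2 $ 2 = 0"
  unfolding Fm_def f11_def mat_mul_entry lin_matrix_def Let_def omega_par_def
  by (simp_all add: field_simps power2_eq_square)

lemma uc_refl: "unit_circle (1 - t) = 1 / unit_circle t"
proof -
  have "unit_circle (1 - t) = exp (2 * pi * \<i> - 2 * pi * \<i> * complex_of_real t)"
    unfolding unit_circle_def by (simp add: right_diff_distrib)
  also have "\<dots> = exp (2 * pi * \<i>) / exp (2 * pi * \<i> * complex_of_real t)"
    by (rule exp_diff)
  finally show ?thesis by (simp add: unit_circle_def)
qed

lemma f11_refl: "f11 B A r (1 - t) = f11 B A r t"
  unfolding f11_def uc_refl by (simp add: algebra_simps)

lemma cm_eqI: "M $ 1 $ 1 = N $ 1 $ 1 \<Longrightarrow> M $ 1 $ 2 = N $ 1 $ 2 \<Longrightarrow> M $ 2 $ 1 = N $ 2 $ 1 \<Longrightarrow>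
   M $ 2 $ 2 = N $ 2 $ 2 \<Longrightarrow> (M::cm) = N"
  unfolding vec_eq_iff forall_2 by blast

lemma Fm_refl: "Fm B A r (1 - t) = Fm B A r t"
  by (rule cm_eqI) (simp_all only: Fm_11 Fm_12 Fm_21 Fm_22 f11_refl)

lemma uc_cont: "continuous_on S unit_circle"
  unfolding unit_circle_def by (intro continuous_intros)

lemma Fm_cont: "continuous_on {0..1} (Fm B A r)"
proof -
  have e: "Fm B A r = (\<lambda>t. \<chi> i j. Fm B A r t $ i $ j)" by simp
  have "continuous_on {0..1} (\<lambda>t. Fm B A r t $ i $ j)" for i j
  proof -
    have c11: "continuous_on {0..1} (f11 B A r)"
      unfolding f11_def by (intro continuous_intros uc_cont) auto
    show ?thesis
      using exhaust_2[of i] exhaust_2[of j]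
      by (auto simp: Fm_11 Fm_12 Fm_21 Fm_22 c11 continuous_on_const)
  qed
  then show ?thesis by (subst e) (intro continuous_on_vec_lambda)
qed



lemma fund_iff: "is_fund_sol B A r X \<longleftrightarrow> X 0 = mat 1 \<and> is_sol (Fm B A r) X"
  unfolding is_fund_sol_def is_sol_def Fm_def by simp

lemma fund_ex: "\<exists>X. is_fund_sol B A r X"
  using exist[OF Fm_cont] fund_iff by blast

lemma mono_eq:
  assumes "is_fund_sol B A r X" shows "monodromy_matrix B A r = X 1"
  unfolding monodromy_matrix_def
proof (rule the_equality)
  show "\<exists>Y. is_fund_sol B A r Y \<and> Y 1 = X 1" using assms by blast
  fix M assume "\<exists>Y. is_fund_sol B A r Y \<and> Y 1 = M"
  then obtain Y where Y: "is_fund_sol B A r Y" "Y 1 = M" by blast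
  show "M = X 1" using uniq[OF Fm_cont, of B A r Y X 1] Y assms by (auto simp: fund_iff)
qed

lemma sol_rmul:
  assumes "is_sol F X" shows "is_sol F (\<lambda>t. X t ** (C::cm))"
  unfolding is_sol_def
proof
  fix t :: real assume t: "t \<in> {0..1}"
  have "((\<lambda>t. X t ** C) has_vector_derivative (F t ** X t) ** C) (at t within {0..1})"
    using bounded_linear.has_vector_derivative[OF bounded_bilinear.bounded_linear_left[OF bb_matmul]]
      assms t unfolding is_sol_def by blast
  then show "((\<lambda>t. X t ** C) has_vector_derivative F t ** (X t ** C)) (at t within {0..1})"
    by (simp add: matrix_mul_assoc)
qed

lemma mat_entries [simp]:
  "(mat c :: cm) $ 1 $ 1 = c" "(mat c :: cm) $ 1 $ 2 = 0" "(mat c :: cm) $ 2 $ 1 = 0" "(mat c :: cm) $ 2 $ 2 = c"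
  by (simp_all add: mat_def)

lemma bl_mat: "bounded_linear (\<lambda>c::complex. (mat c :: cm))"
proof (rule bounded_linear_intro[where K=4])
  show "mat (x + y) = (mat x :: cm) + mat y" for x y by (simp add: vec_eq_iff mat_def)
  show "mat (r *\<^sub>R x) = r *\<^sub>R (mat x :: cm)" for r x by (simp add: vec_eq_iff mat_def)
  fix x :: complex
  have e: "norm ((mat x :: cm) $ i $ j) \<le> norm x" for i j by (simp add: mat_def)
  have r: "norm ((mat x :: cm) $ i) \<le> 2 * norm x" for i
    using norm_le_sum_cart[of "(mat x::cm) $ i"] e[of i 1] e[of i 2] by (simp add: sum_2)
  show "norm (mat x :: cm) \<le> norm x * 4"
    using norm_le_sum_cart[of "mat x :: cm"] r[of 1] r[of 2] by (simp add: sum_2)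
qed

definition psc :: "complex \<Rightarrow> complex \<Rightarrow> complex \<Rightarrow> complex \<Rightarrow> complex" where
  "psc B A r w = 2 * pi * \<i> * l_par B r * w + mu_par A r * (exp (2 * pi * \<i> * w) - exp (- (2 * pi * \<i> * w)))"

lemma psc_deriv:
  "(psc B A r has_field_derivative
     (2 * pi * \<i> * l_par B r + mu_par A r * (2 * pi * \<i> * exp (2 * pi * \<i> * w) + 2 * pi * \<i> * exp (- (2 * pi * \<i> * w))))) (at w)"
  unfolding psc_def by (auto intro!: derivative_eq_intros simp: algebra_simps)

lemma psc_real_deriv:
  "(psc B A r has_field_derivative f11 B A r t) (at (complex_of_real t))"
proof -
  have "f11 B A r t = 2 * pi * \<i> * l_par B r + mu_par A r * (2 * pi * \<i> * exp (2 * pi * \<i> * complex_of_real t)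
        + 2 * pi * \<i> * exp (- (2 * pi * \<i> * complex_of_real t)))"
    unfolding f11_def unit_circle_def by (simp add: exp_minus field_simps)
  then show ?thesis using psc_deriv by simp
qed

definition phi :: "complex \<Rightarrow> complex \<Rightarrow> complex \<Rightarrow> real \<Rightarrow> complex" where
  "phi B A r t = exp (psc B A r (complex_of_real t))"
definition phim :: "complex \<Rightarrow> complex \<Rightarrow> complex \<Rightarrow> real \<Rightarrow> complex" where
  "phim B A r t = exp (- psc B A r (complex_of_real t))"

lemma phi_deriv: "(phi B A r has_vector_derivative (f11 B A r t * phi B A r t)) (at t within S)"
proof -
  have "((\<lambda>w. exp (psc B A r w)) has_field_derivative (exp (psc B A r (complex_of_real t)) * f11 B A r t)) (at (complex_of_real t))"
    by (rule DERIV_chain2[OF DERIV_exp psc_real_deriv])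
  from has_vector_derivative_real_field[OF this] show ?thesis
    unfolding phi_def by (simp add: mult.commute)
qed

lemma phim_deriv: "(phim B A r has_vector_derivative (- f11 B A r t * phim B A r t)) (at t within S)"
proof -
  have "((\<lambda>w. exp (- psc B A r w)) has_field_derivative (exp (- psc B A r (complex_of_real t)) * (- f11 B A r t))) (at (complex_of_real t))"
    by (rule DERIV_chain2[OF DERIV_exp DERIV_minus[OF psc_real_deriv]])
  from has_vector_derivative_real_field[OF this] show ?thesis
    unfolding phim_def by (simp add: mult.commute)
qed

lemma psc0: "psc B A r 0 = 0" by (simp add: psc_def)
lemma psc1: "psc B A r 1 = 2 * pi * \<i> * l_par B r"
  by (simp add: psc_def exp_minus)



definition Sm :: cm where "Sm = (\<chi> i j. if i = 1 \<and> j = 2 then -1 else if i = 2 \<and> j = 1 then 1 else 0)"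

lemma Sm_entries [simp]: "Sm$1$1 = 0" "Sm$1$2 = -1" "Sm$2$1 = 1" "Sm$2$2 = 0"
  by (simp_all add: Sm_def)

lemma alg1:
  assumes "F$1$1 = f" "F$1$2 = g" "F$2$1 = g" "F$2$2 = 0"
  shows "mat p ** (Sm ** ((-1) *\<^sub>R (F ** (W::cm)))) + mat (f * p) ** (Sm ** W) = (F::cm) ** (mat p ** (Sm ** W))"
  by (rule cm_eqI) (simp_all add: matmul_entry assms algebra_simps)

lemma phi0: "phi B A r 0 = 1" by (simp add: phi_def psc0)
lemma phi1: "phi B A r 1 = exp (2 * pi * \<i> * l_par B r)" by (simp add: phi_def psc1)
lemma phim0: "phim B A r 0 = 1" by (simp add: phim_def psc0)
lemma phim1: "phim B A r 1 = exp (- (2 * pi * \<i> * l_par B r))" by (simp add: phim_def psc1)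

lemma mono_sym:
  assumes X: "is_fund_sol B A r X"
  shows "X 1 ** (Sm ** X 1) = mat (exp (2 * pi * \<i> * l_par B r)) ** Sm"
proof -
  have Xs: "is_sol (Fm B A r) X" and X0: "X 0 = mat 1" using X by (auto simp: fund_iff)
  define Y where "Y t = mat (phi B A r t) ** (Sm ** X (1 - t))" for t
  have Ysol: "is_sol (Fm B A r) Y"
    unfolding is_sol_def
  proof
    fix t :: real assume t: "t \<in> {0..1}"
    have t1: "1 - t \<in> {0..1}" using t by auto
    have img: "(\<lambda>t. 1 - t) ` {0..1} = {0..1::real}"
    proof
      show "(\<lambda>t. 1 - t) ` {0..1} \<subseteq> {0..1::real}" by auto
      show "{0..1::real} \<subseteq> (\<lambda>t. 1 - t) ` {0..1}"
      proof
        fix x :: real assume "x \<in> {0..1}"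
        then show "x \<in> (\<lambda>t. 1 - t) ` {0..1}" by (intro image_eqI[where x="1 - x"]) auto
      qed
    qed
    have d1r: "((\<lambda>t. 1 - t) has_real_derivative -1) (at t within {0..1})"
      by (auto intro!: derivative_eq_intros)
    then have d1: "((\<lambda>t. 1 - t) has_vector_derivative -1) (at t within {0..1})"
      by (simp add: has_real_derivative_iff_has_vector_derivative)
    have dX: "(X has_vector_derivative Fm B A r (1 - t) ** X (1 - t)) (at (1 - t) within (\<lambda>t. 1 - t) ` {0..1})"
      using Xs t1 unfolding is_sol_def img by blast
    have dXr: "((\<lambda>t. X (1 - t)) has_vector_derivative (-1) *\<^sub>R (Fm B A r (1 - t) ** X (1 - t))) (at t within {0..1})"
      using vector_diff_chain_within[OF d1 dX] by (simp add: o_def)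
    have dSX: "((\<lambda>t. Sm ** X (1 - t)) has_vector_derivative Sm ** ((-1) *\<^sub>R (Fm B A r (1 - t) ** X (1 - t)))) (at t within {0..1})"
      by (rule bounded_linear.has_vector_derivative[OF bounded_bilinear.bounded_linear_right[OF bb_matmul] dXr])
    have dM: "((\<lambda>t. mat (phi B A r t) :: cm) has_vector_derivative mat (f11 B A r t * phi B A r t)) (at t within {0..1})"
      by (rule bounded_linear.has_vector_derivative[OF bl_mat phi_deriv])
    have "(Y has_vector_derivative (mat (phi B A r t) ** (Sm ** ((-1) *\<^sub>R (Fm B A r (1 - t) ** X (1 - t))))
        + mat (f11 B A r t * phi B A r t) ** (Sm ** X (1 - t)))) (at t within {0..1})"
      unfolding Y_def[abs_def] by (rule bounded_bilinear.has_vector_derivative[OF bb_matmul dM dSX])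
    moreover have "mat (phi B A r t) ** (Sm ** ((-1) *\<^sub>R (Fm B A r t ** X (1 - t))))
        + mat (f11 B A r t * phi B A r t) ** (Sm ** X (1 - t)) = Fm B A r t ** Y t"
      unfolding Y_def by (rule alg1[OF Fm_11 Fm_12 Fm_21 Fm_22])
    ultimately show "(Y has_vector_derivative Fm B A r t ** Y t) (at t within {0..1})"
      by (simp add: Fm_refl)
  qed
  define Z where "Z t = X t ** (Sm ** X 1)" for t
  have Zsol: "is_sol (Fm B A r) Z" unfolding Z_def by (rule sol_rmul[OF Xs])
  have "Y 0 = Z 0" by (simp add: Y_def Z_def X0 phi0)
  from uniq[OF Fm_cont Ysol Zsol this, of 1] show ?thesis
    by (simp add: Y_def Z_def X0 phi1)
qed

lemma det_mono:
  assumes X: "is_fund_sol B A r X"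
  shows "X 1 $ 1 $ 1 * X 1 $ 2 $ 2 - X 1 $ 1 $ 2 * X 1 $ 2 $ 1 = exp (2 * pi * \<i> * l_par B r)"
proof -
  have Xs: "is_sol (Fm B A r) X" and X0: "X 0 = mat 1" using X by (auto simp: fund_iff)
  have blc: "bounded_linear (\<lambda>M::cm. M $ i $ j)" for i j
    by (rule bounded_linear_compose[OF bounded_linear_vec_nth bounded_linear_vec_nth])
  have comp: "((\<lambda>t. X t $ i $ j) has_vector_derivative (Fm B A r t ** X t) $ i $ j) (at t within {0..1})"
    if t: "t \<in> {0..1}" for i j t
    using bounded_linear.has_vector_derivative[OF blc, of X "Fm B A r t ** X t" "at t within {0..1}" i j] Xs t
    unfolding is_sol_def by blast
  define d where "d t = X t $ 1 $ 1 * X t $ 2 $ 2 - X t $ 1 $ 2 * X t $ 2 $ 1" for t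
  define h where "h t = d t * phim B A r t" for t
  have hd: "(h has_vector_derivative 0) (at t within {0..1})" if t: "t \<in> {0..1}" for t
  proof -
    have D: "(h has_vector_derivative
        (d t * (- f11 B A r t * phim B A r t) +
         ((X t $ 1 $ 1 * (Fm B A r t ** X t) $ 2 $ 2 + (Fm B A r t ** X t) $ 1 $ 1 * X t $ 2 $ 2)
        - (X t $ 1 $ 2 * (Fm B A r t ** X t) $ 2 $ 1 + (Fm B A r t ** X t) $ 1 $ 2 * X t $ 2 $ 1)) * phim B A r t))
        (at t within {0..1})"
      unfolding h_def[abs_def] d_def[abs_def]
      by (intro has_vector_derivative_mult has_vector_derivative_diff comp t phim_deriv)
    have E: "d t * (- f11 B A r t * phim B A r t) +
         ((X t $ 1 $ 1 * (Fm B A r t ** X t) $ 2 $ 2 + (Fm B A r t ** X t) $ 1 $ 1 * X t $ 2 $ 2)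
        - (X t $ 1 $ 2 * (Fm B A r t ** X t) $ 2 $ 1 + (Fm B A r t ** X t) $ 1 $ 2 * X t $ 2 $ 1)) * phim B A r t = 0"
      unfolding d_def matmul_entry Fm_11 Fm_12 Fm_21 Fm_22 by (simp add: algebra_simps)
    show ?thesis using D unfolding E .
  qed
  obtain c where c: "\<And>t. t \<in> {0..1} \<Longrightarrow> h t = c"
    using has_vector_derivative_zero_constant[of "{0..1::real}" h] hd by (metis convex_real_interval(5))
  have "h 1 = h 0" using c[of 0] c[of 1] by simp
  then have "d 1 * exp (- (2 * pi * \<i> * l_par B r)) = 1"
    by (simp add: h_def d_def X0 phim0 phim1)
  then have "d 1 = exp (2 * pi * \<i> * l_par B r)"
    by (simp add: exp_minus field_simps)
  then show ?thesis by (simp add: d_def)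
qed

lemma mono_props:
  fixes B A r :: complex
  defines "M \<equiv> monodromy_matrix B A r"
  shows "M $ 1 $ 2 = M $ 2 $ 1" "M $ 1 $ 1 * M $ 2 $ 2 - M $ 1 $ 2 * M $ 2 $ 1 \<noteq> 0"
proof -
  obtain X where X: "is_fund_sol B A r X" using fund_ex by blast
  have M: "M = X 1" unfolding M_def by (rule mono_eq[OF X])
  define D where "D = exp (2 * pi * \<i> * l_par B r)"
  have det: "M $ 1 $ 1 * M $ 2 $ 2 - M $ 1 $ 2 * M $ 2 $ 1 = D" unfolding M D_def by (rule det_mono[OF X])
  then show "M $ 1 $ 1 * M $ 2 $ 2 - M $ 1 $ 2 * M $ 2 $ 1 \<noteq> 0" by (simp add: D_def)
  have sym: "M ** (Sm ** M) = mat D ** Sm" unfolding M D_def by (rule mono_sym[OF X])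
  have e12: "(M ** (Sm ** M)) $ 1 $ 2 = (mat D ** Sm) $ 1 $ 2" using sym by simp
  have e21: "(M ** (Sm ** M)) $ 2 $ 1 = (mat D ** Sm) $ 2 $ 1" using sym by simp
  define a b c d where "a = M $ 1 $ 1" "b = M $ 1 $ 2" "c = M $ 2 $ 1" "d = M $ 2 $ 2"
  have q1: "b * b - a * d = - D" using e12 by (simp add: matmul_entry a_b_c_d_def algebra_simps)
  have q2: "a * d - c * c = D" using e21 by (simp add: matmul_entry a_b_c_d_def algebra_simps)
  have q3: "a * d - b * c = D" using det by (simp add: a_b_c_d_def)
  have "(b - c)^2 = 0" using q1 q2 q3 by (simp add: power2_eq_square algebra_simps)
  then show "M $ 1 $ 2 = M $ 2 $ 1" by (simp add: a_b_c_d_def)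
qed



lemma mapp_none: "moebius_app N None = (if N$2$1 = 0 then None else Some (N$1$1 / N$2$1))"
  by (simp add: moebius_app_def)

lemma mapp_fix_iff:
  "moebius_app N (Some z) = Some z \<longleftrightarrow> N$2$1 * z + N$2$2 \<noteq> 0 \<and> N$1$1 * z + N$1$2 = z * (N$2$1 * z + N$2$2)"
proof (cases "N$2$1 * z + N$2$2 = 0")
  case True then show ?thesis by (simp add: moebius_app_def)
next
  case False then show ?thesis by (simp add: moebius_app_def divide_eq_eq)
qed

lemma i_sq: "s \<in> {1, -1::complex} \<Longrightarrow> (s * \<i>) * (s * \<i>) = -1"
  by auto

lemma fixw_iff:
  assumes sym: "N$2$1 = N$1$2" and det: "N$1$1 * N$2$2 - N$1$2 * N$2$1 \<noteq> 0"
    and w: "w * w = -1"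
  shows "moebius_app N (Some w) = Some w \<longleftrightarrow> (N$1$1 - N$2$2) * w = -2 * N$1$2"
proof -
  define a b d where "a = N$1$1" "b = N$1$2" "d = N$2$2"
  have det': "a * d - b * b \<noteq> 0" using det sym by (simp add: a_b_d_def)
  have "moebius_app N (Some w) = Some w \<longleftrightarrow> b * w + d \<noteq> 0 \<and> a * w + b = w * (b * w + d)"
    unfolding mapp_fix_iff sym a_b_d_def ..
  also have "\<dots> \<longleftrightarrow> (a - d) * w = -2 * b"
  proof
    assume "b * w + d \<noteq> 0 \<and> a * w + b = w * (b * w + d)"
    then have "a * w + b = w * (b * w + d)" by blast
    then show "(a - d) * w = -2 * b" using w by algebra
  next
    assume h: "(a - d) * w = -2 * b"
    have e: "a * w + b = w * (b * w + d)" using h w by algebra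
    have "b * w + d \<noteq> 0"
    proof
      assume "b * w + d = 0"
      then have "a * d - b * b = 0" using h w by algebra
      then show False using det' by simp
    qed
    then show "b * w + d \<noteq> 0 \<and> a * w + b = w * (b * w + d)" using e by simp
  qed
  finally show ?thesis by (simp add: a_b_d_def)
qed

lemma fix_imp_par:
  assumes sym: "N$2$1 = N$1$2" and det: "N$1$1 * N$2$2 - N$1$2 * N$2$1 \<noteq> 0"
    and w: "w * w = -1" and fx: "moebius_app N (Some w) = Some w"
  shows "parabolic (moebius_app N) \<or> moebius_app N = id"
proof -
  define a b d where "a = N$1$1" "b = N$1$2" "d = N$2$2"
  have det': "a * d - b * b \<noteq> 0" using det sym by (simp add: a_b_d_def)
  have h: "(a - d) * w = -2 * b" using fixw_iff[OF sym det w] fx by (simp add: a_b_d_def)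
  have w0: "w \<noteq> 0" using w by auto
  show ?thesis
  proof (cases "b = 0")
    case True
    then have "a = d" using h w0 by simp
    then have d0: "d \<noteq> 0" using det' True by auto
    have "moebius_app N = id"
    proof
      fix p show "moebius_app N p = id p"
      proof (cases p)
        case None then show ?thesis using True sym by (simp add: moebius_app_def a_b_d_def)
      next
        case (Some z)
        then show ?thesis using True sym d0 \<open>a = d\<close> by (simp add: moebius_app_def a_b_d_def)
      qed
    qed
    then show ?thesis by simp
  next
    case False
    have nid: "moebius_app N \<noteq> id"
    proof
      assume "moebius_app N = id"
      then have "moebius_app N None = None" by simp
      then show False using False sym by (simp add: mapp_none a_b_d_def)
    qed
    have "\<exists>!p. moebius_app N p = p"
    proof (rule ex1I[of _ "Some w"])
      show "moebius_app N (Some w) = Some w" by (rule fx)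
      fix p assume p: "moebius_app N p = p"
      show "p = Some w"
      proof (cases p)
        case None then show ?thesis using p False sym by (simp add: mapp_none a_b_d_def)
      next
        case (Some z)
        have "moebius_app N (Some z) = Some z" using p Some by simp
        then have "a * z + b = z * (b * z + d)"
          using sym unfolding mapp_fix_iff by (simp add: a_b_d_def)
        then have "b * ((z - w) * (z - w)) = 0" using h w by algebra
        then have "z = w" using False by simp
        then show ?thesis using Some by simp
      qed
    qed
    then show ?thesis using nid by (simp add: parabolic_def)
  qed
qed

lemma root_fixed:
  assumes sym: "N$2$1 = N$1$2" and det: "N$1$1 * N$2$2 - N$1$2 * N$2$1 \<noteq> 0"
    and q: "N$1$2 * z * z + (N$2$2 - N$1$1) * z - N$1$2 = 0"
  shows "moebius_app N (Some z) = Some z"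
proof -
  define a b d where "a = N$1$1" "b = N$1$2" "d = N$2$2"
  have det': "a * d - b * b \<noteq> 0" using det sym by (simp add: a_b_d_def)
  have q': "b * z * z + (d - a) * z - b = 0" using q by (simp add: a_b_d_def)
  have e: "a * z + b = z * (b * z + d)" using q' by algebra
  have "b * z + d \<noteq> 0"
  proof
    assume "b * z + d = 0"
    then have "a * d - b * b = 0" using q' by algebra
    then show False using det' by simp
  qed
  then show ?thesis using e sym unfolding mapp_fix_iff by (simp add: a_b_d_def)
qed

lemma par_imp_fix:
  assumes sym: "N$2$1 = N$1$2" and det: "N$1$1 * N$2$2 - N$1$2 * N$2$1 \<noteq> 0"
    and pi: "parabolic (moebius_app N) \<or> moebius_app N = id"
  shows "moebius_app N (Some \<i>) = Some \<i> \<or> moebius_app N (Some (-\<i>)) = Some (-\<i>)"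
proof (cases "moebius_app N = id")
  case True then show ?thesis by simp
next
  case False
  then have par: "\<exists>!p. moebius_app N p = p" using pi by (simp add: parabolic_def)
  define a b d where "a = N$1$1" "b = N$1$2" "d = N$2$2"
  have det': "a * d - b * b \<noteq> 0" using det sym by (simp add: a_b_d_def)
  have disc: "(a - d) * (a - d) + 4 * b * b = 0"
  proof (rule ccontr)
    assume D: "(a - d) * (a - d) + 4 * b * b \<noteq> 0"
    show False
    proof (cases "b = 0")
      case True
      have f1: "moebius_app N None = None" using True sym by (simp add: mapp_none a_b_d_def)
      have "d \<noteq> 0" using det' True by auto
      then have f2: "moebius_app N (Some 0) = Some 0" using True sym unfolding mapp_fix_iff by (simp add: a_b_d_def)
      show False using par f1 f2 by (metis option.distinct(1))
    next
      case False
      define s where "s = csqrt ((a - d) * (a - d) + 4 * b * b)"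
      have ss: "s * s = (a - d) * (a - d) + 4 * b * b" unfolding s_def by (metis power2_csqrt power2_eq_square)
      have s0: "s \<noteq> 0" using ss D by auto
      define z1 z2 where "z1 = (a - d + s) / (2 * b)" "z2 = (a - d - s) / (2 * b)"
      have z1e: "2 * b * z1 = a - d + s" and z2e: "2 * b * z2 = a - d - s"
        using False by (simp_all add: z1_z2_def)
      have "4 * b * (b * z1 * z1 + (d - a) * z1 - b) = 0" using z1e ss by algebra
      then have q1: "b * z1 * z1 + (d - a) * z1 - b = 0" using False by simp
      have "4 * b * (b * z2 * z2 + (d - a) * z2 - b) = 0" using z2e ss by algebra
      then have q2: "b * z2 * z2 + (d - a) * z2 - b = 0" using False by simp
      have f1: "moebius_app N (Some z1) = Some z1"
        by (rule root_fixed[OF sym det]) (use q1 in \<open>simp add: a_b_d_def\<close>)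
      have f2: "moebius_app N (Some z2) = Some z2"
        by (rule root_fixed[OF sym det]) (use q2 in \<open>simp add: a_b_d_def\<close>)
      have "z1 \<noteq> z2"
      proof
        assume "z1 = z2"
        have "2 * s = 2 * b * z1 - 2 * b * z2" using z1e z2e by simp
        then have "2 * s = 0" using \<open>z1 = z2\<close> by simp
        then show False using s0 by simp
      qed
      then show False using par f1 f2 by (metis option.inject)
    qed
  qed
  have ii: "\<i> * \<i> = (-1::complex)" by simp
  have "(a - d - 2 * \<i> * b) * (a - d + 2 * \<i> * b) = 0" using disc ii by algebra
  then have "a - d - 2 * \<i> * b = 0 \<or> a - d + 2 * \<i> * b = 0" by simp
  then have "a - d = 2 * \<i> * b \<or> a - d = - 2 * \<i> * b"
  proof
    assume "a - d - 2 * \<i> * b = 0" then have "a - d = 2 * \<i> * b" by algebra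
    then show ?thesis by blast
  next
    assume "a - d + 2 * \<i> * b = 0" then have "a - d = - 2 * \<i> * b" by algebra
    then show ?thesis by blast
  qed
  then show ?thesis
  proof
    assume h: "a - d = 2 * \<i> * b"
    have "(a - d) * \<i> = -2 * b" unfolding h by (simp add: algebra_simps)
    then have "moebius_app N (Some \<i>) = Some \<i>"
      using fixw_iff[OF sym det ii] by (simp add: a_b_d_def)
    then show ?thesis by simp
  next
    assume h: "a - d = - 2 * \<i> * b"
    have ii': "(-\<i>) * (-\<i>) = (-1::complex)" by simp
    have "(a - d) * (-\<i>) = -2 * b" unfolding h by (simp add: algebra_simps)
    then have "moebius_app N (Some (-\<i>)) = Some (-\<i>)"
      using fixw_iff[OF sym det ii'] by (simp add: a_b_d_def)
    then show ?thesis by simp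
  qed
qed



theorem proposition5p5:
  shows "(\<forall>s \<in> {1, -1::complex}. Sigma_pm s =
           {(B, A, r). r \<noteq> 0 \<and> (parabolic (Mon B A r) \<or> Mon B A r = id) \<and>
                       Mon B A r (Some (s * \<i>)) = Some (s * \<i>)})
       \<and> (\<forall>B A r. r \<noteq> 0 \<longrightarrow> (parabolic (Mon B A r) \<or> Mon B A r = id) \<longrightarrow>
                  (B, A, r) \<in> Sigma_pm 1 \<union> Sigma_pm (-1))"
proof
  have sym: "monodromy_matrix B A r $ 2 $ 1 = monodromy_matrix B A r $ 1 $ 2" for B A r
    using mono_props(1)[of B A r] by simp
  have det: "monodromy_matrix B A r $ 1 $ 1 * monodromy_matrix B A r $ 2 $ 2
      - monodromy_matrix B A r $ 1 $ 2 * monodromy_matrix B A r $ 2 $ 1 \<noteq> 0" for B A r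
    using mono_props(2)[of B A r] by simp
  show "\<forall>s \<in> {1, -1::complex}. Sigma_pm s =
           {(B, A, r). r \<noteq> 0 \<and> (parabolic (Mon B A r) \<or> Mon B A r = id) \<and>
                       Mon B A r (Some (s * \<i>)) = Some (s * \<i>)}"
  proof
    fix s :: complex assume s: "s \<in> {1, -1}"
    show "Sigma_pm s = {(B, A, r). r \<noteq> 0 \<and> (parabolic (Mon B A r) \<or> Mon B A r = id) \<and>
                       Mon B A r (Some (s * \<i>)) = Some (s * \<i>)}"
      unfolding Sigma_pm_def Mon_def
      using fix_imp_par[OF sym det i_sq[OF s]] by auto
  qed
  show "\<forall>B A r. r \<noteq> 0 \<longrightarrow> (parabolic (Mon B A r) \<or> Mon B A r = id) \<longrightarrow>
                  (B, A, r) \<in> Sigma_pm 1 \<union> Sigma_pm (-1)"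
  proof (intro allI impI)
    fix B A r :: complex assume r: "r \<noteq> 0" and p: "parabolic (Mon B A r) \<or> Mon B A r = id"
    have "Mon B A r (Some \<i>) = Some \<i> \<or> Mon B A r (Some (-\<i>)) = Some (-\<i>)"
      using par_imp_fix[OF sym det] p unfolding Mon_def by blast
    then show "(B, A, r) \<in> Sigma_pm 1 \<union> Sigma_pm (-1)"
      using r unfolding Sigma_pm_def by auto
  qed
qed

end
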